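(* Assume the capacities satisfy (C1)–(C3), and let $G_N$ (Poissonian random graph), $G_N'$, $H_N$, $H_N'$, $\mathcal A_N$ and $c_N=N^\xi$ be as described below. Then for $N$ sufficiently large, every $t\in\mathbb N$ and every $b\in(0,1)$, $$\mathbb P(H_N\ne H_N')\le \mathbb P(\mathcal A_N^c)+\mathbb P(H_N>2t)+2t\,\mathbb P(|\mathcal N_{t-1}|>N^b)+O(tN^{-1+b}c_N^4).$$
   Context: Capacities $\lambda_1,\dots,\lambda_N>0$ deterministic; $l_N=\sum_i\lambda_i$, $\mu_N=\frac1N\sum_i\lambda_i$, $\nu_N=\sum_i\lambda_i^2/\sum_i\lambda_i$, $f^{(N)}_n=\frac1N\sum_i e^{-\lambda_i}\frac{\lambda_i^n}{n!}$, $g^{(N)}_n=\frac{1}{N\mu_N}\sum_i e^{-\lambda_i}\frac{\lambda_i^{n+1}}{n!}$; $d_{TV}(p,q)=\frac12\sum_j|p_j-q_j|$. (C1): there are $\mu\in(0,\infty)$, $\nu\in(1,\infty)$, $\alpha_1>0$ with $|\mu_N-\mu|,|\nu_N-\nu|=O(N^{-\alpha_1})$. (C2): there are $N$-independent sequences $f,g$ and $\alpha_2>0$ with $d_{TV}(f^{(N)},f),d_{TV}(g^{(N)},g)=O(N^{-\alpha_2})$. (C3): there is $\tau>3$ such that for every $\varepsilon>0$ (with $\gamma:=\frac1{\tau-1}+\varepsilon<\frac12$), $\limsup_N\frac1N\sum_i\lambda_i^{\tau-1-\varepsilon}<\infty$ and $\max_i\lambda_i\le N^\gamma$. $G_N$: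 Poissonian random graph (independent Poisson$(\lambda_i\lambda_j/l_N)$ numbers of edges between distinct $i,j$; connection probability $p_{ij}=1-e^{-\lambda_i\lambda_j/l_N}$). $G_N'$: independent edge indicators with $p'_{ij}=h(\lambda_i\lambda_j/l_N)$, $h:[0,\infty)\to[0,1]$, $h(x)-x=O(x^2)$ as $x\downarrow0$. Coupling: independently over $i<j$, $(\hat X_{ij},\hat X'_{ij},K_{ij})$ takes values $(1,1,0),(1,0,1),(0,1,1),(0,0,0)$ with probabilities $\min\{p_{ij},p'_{ij}\}$, $p_{ij}-\min\{p_{ij},p'_{ij}\}$, $\max\{p_{ij},p'_{ij}\}-p_{ij}$, $1-\max\{p_{ij},p'_{ij}\}$; $\hat X_{ij},\hat X'_{ij}$ are the connection indicators of $G_N,G_N'$; $K_{ji}=K_{ij}$, $K_i=\sum_{j\ne i}K_{ij}$. For $\xi>0$, $c_N=N^\xi$ and $\mathcal A_N=\{\sum_{i}K_i\mathbf 1\{\lambda_i>c_N\}=0\}$. $H_N$, $H_N'$ are the graph distances ($+\infty$ if disconnected) between the same two distinct uniformly chosen nodes $A_1\ne A_2$ in $G_N$, $G_N'$. For a uniformly chosen node $A$, $\mathcal N_t=\{1\le j\le N: d(A,j)\le t\}$ where $d$ is graph distance in $G_N$. *)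

theory Defs
  imports "HOL-Probability.Probability" "HOL-Library.Landau_Symbols" "HOL-Library.Extended_Nat"
begin

text \<open>Capacities: lam N i is the capacity lambda_i of node i (nodes are 0,...,N-1)
  in the N-th graph.\<close>

definition lN :: "(nat \<Rightarrow> nat \<Rightarrow> real) \<Rightarrow> nat \<Rightarrow> real" where
  "lN lam N = (\<Sum>i<N. lam N i)"

definition muN :: "(nat \<Rightarrow> nat \<Rightarrow> real) \<Rightarrow> nat \<Rightarrow> real" where
  "muN lam N = (1 / real N) * (\<Sum>i<N. lam N i)"

definition nuN :: "(nat \<Rightarrow> nat \<Rightarrow> real) \<Rightarrow> nat \<Rightarrow> real" where
  "nuN lam N = (\<Sum>i<N. (lam N i)^2) / (\<Sum>i<N. lam N i)"

definition fN :: "(nat \<Rightarrow> nat \<Rightarrow> real) \<Rightarrow> nat \<Rightarrow> nat \<Rightarrow> real" where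
  "fN lam N n = (1 / real N) * (\<Sum>i<N. exp (- lam N i) * (lam N i)^n / fact n)"

definition gN :: "(nat \<Rightarrow> nat \<Rightarrow> real) \<Rightarrow> nat \<Rightarrow> nat \<Rightarrow> real" where
  "gN lam N n = (1 / (real N * muN lam N)) * (\<Sum>i<N. exp (- lam N i) * (lam N i)^(n+1) / fact n)"

definition dTV :: "(nat \<Rightarrow> real) \<Rightarrow> (nat \<Rightarrow> real) \<Rightarrow> real" where
  "dTV p q = (1/2) * (\<Sum>j. \<bar>p j - q j\<bar>)"

text \<open>Unordered pairs of distinct nodes, represented as (i,j) with i<j<N.\<close>
definition pairsN :: "nat \<Rightarrow> (nat \<times> nat) set" where
  "pairsN N = {(i,j). i < j \<and> j < N}"

definition wN :: "(nat \<Rightarrow> nat \<Rightarrow> real) \<Rightarrow> nat \<Rightarrow> nat \<Rightarrow> nat \<Rightarrow> real" where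
  "wN lam N i j = lam N i * lam N j / lN lam N"

definition pN :: "(nat \<Rightarrow> nat \<Rightarrow> real) \<Rightarrow> nat \<Rightarrow> nat \<Rightarrow> nat \<Rightarrow> real" where
  "pN lam N i j = 1 - exp (- wN lam N i j)"

definition pN' :: "(real \<Rightarrow> real) \<Rightarrow> (nat \<Rightarrow> nat \<Rightarrow> real) \<Rightarrow> nat \<Rightarrow> nat \<Rightarrow> nat \<Rightarrow> real" where
  "pN' h lam N i j = h (wN lam N i j)"

text \<open>Law of the coupled triple (X_ij, X'_ij, K_ij) for a single pair.\<close>
definition coup :: "real \<Rightarrow> real \<Rightarrow> (bool \<times> bool \<times> bool) pmf" where
  "coup p p' = embed_pmf (\<lambda>v.
     if v = (True, True, False) then min p p'
     else if v = (True, False, True) then p - min p p'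
     else if v = (False, True, True) then max p p' - p
     else if v = (False, False, False) then 1 - max p p'
     else 0)"

definition edge_pmf :: "(real \<Rightarrow> real) \<Rightarrow> (nat \<Rightarrow> nat \<Rightarrow> real) \<Rightarrow> nat
     \<Rightarrow> (nat \<times> nat \<Rightarrow> bool \<times> bool \<times> bool) pmf" where
  "edge_pmf h lam N = Pi_pmf (pairsN N) (False, False, False)
     (\<lambda>(i,j). coup (pN lam N i j) (pN' h lam N i j))"

type_synonym config = "nat \<times> nat \<Rightarrow> bool \<times> bool \<times> bool"

definition Xhat :: "config \<Rightarrow> nat \<Rightarrow> nat \<Rightarrow> bool" where
  "Xhat \<omega> i j = (i \<noteq> j \<and> fst (\<omega> (min i j, max i j)))"

definition Xhat' :: "config \<Rightarrow> nat \<Rightarrow> nat \<Rightarrow> bool" where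
  "Xhat' \<omega> i j = (i \<noteq> j \<and> fst (snd (\<omega> (min i j, max i j))))"

definition Kc :: "config \<Rightarrow> nat \<Rightarrow> nat \<Rightarrow> bool" where
  "Kc \<omega> i j = (i \<noteq> j \<and> snd (snd (\<omega> (min i j, max i j))))"

definition Kdeg :: "config \<Rightarrow> nat \<Rightarrow> nat \<Rightarrow> nat" where
  "Kdeg \<omega> N i = (\<Sum>j\<in>{..<N} - {i}. if Kc \<omega> i j then 1 else 0)"

definition edgesG :: "config \<Rightarrow> (nat \<times> nat) set" where
  "edgesG \<omega> = {(i,j). Xhat \<omega> i j}"

definition edgesG' :: "config \<Rightarrow> (nat \<times> nat) set" where
  "edgesG' \<omega> = {(i,j). Xhat' \<omega> i j}"

definition gdist :: "(nat \<times> nat) set \<Rightarrow> nat \<Rightarrow> nat \<Rightarrow> enat" where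
  "gdist E i j = (if \<exists>n. (i,j) \<in> E ^^ n then enat (LEAST n. (i,j) \<in> E ^^ n) else \<infinity>)"

text \<open>The event A_N, with c_N = N powr xi.\<close>
definition eventA :: "(nat \<Rightarrow> nat \<Rightarrow> real) \<Rightarrow> real \<Rightarrow> nat \<Rightarrow> config set" where
  "eventA lam \<xi> N = {\<omega>. (\<Sum>i<N. Kdeg \<omega> N i * (if lam N i > real N powr \<xi> then 1 else 0)) = 0}"

definition node_pair_pmf :: "nat \<Rightarrow> (nat \<times> nat) pmf" where
  "node_pair_pmf N = pmf_of_set {(a1,a2). a1 < N \<and> a2 < N \<and> a1 \<noteq> a2}"

definition prob_H_neq :: "(real \<Rightarrow> real) \<Rightarrow> (nat \<Rightarrow> nat \<Rightarrow> real) \<Rightarrow> nat \<Rightarrow> real" where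
  "prob_H_neq h lam N = measure_pmf.prob (pair_pmf (node_pair_pmf N) (edge_pmf h lam N))
     {((a1,a2),\<omega>). gdist (edgesG \<omega>) a1 a2 \<noteq> gdist (edgesG' \<omega>) a1 a2}"

definition prob_notA :: "(real \<Rightarrow> real) \<Rightarrow> (nat \<Rightarrow> nat \<Rightarrow> real) \<Rightarrow> real \<Rightarrow> nat \<Rightarrow> real" where
  "prob_notA h lam \<xi> N = measure_pmf.prob (edge_pmf h lam N) (- eventA lam \<xi> N)"

definition prob_H_gt :: "(real \<Rightarrow> real) \<Rightarrow> (nat \<Rightarrow> nat \<Rightarrow> real) \<Rightarrow> nat \<Rightarrow> nat \<Rightarrow> real" where
  "prob_H_gt h lam N s = measure_pmf.prob (pair_pmf (node_pair_pmf N) (edge_pmf h lam N))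
     {((a1,a2),\<omega>). gdist (edgesG \<omega>) a1 a2 > enat s}"

definition prob_ball_gt :: "(real \<Rightarrow> real) \<Rightarrow> (nat \<Rightarrow> nat \<Rightarrow> real) \<Rightarrow> nat \<Rightarrow> nat \<Rightarrow> real \<Rightarrow> real" where
  "prob_ball_gt h lam N s b = measure_pmf.prob (pair_pmf (pmf_of_set {..<N}) (edge_pmf h lam N))
     {(a,\<omega>). real (card {j. j < N \<and> gdist (edgesG \<omega>) a j \<le> enat s}) > real N powr b}"

end

theory Submission
  imports Defs
begin


lemma gdist_le_iff: "gdist E a j \<le> enat s \<longleftrightarrow> (\<exists>n\<le>s. (a,j) \<in> E ^^ n)"
proof
  assume h: "gdist E a j \<le> enat s"
  then have ex: "\<exists>n. (a,j) \<in> E ^^ n" unfolding gdist_def by (auto split: if_splits)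
  then have "(LEAST n. (a,j) \<in> E ^^ n) \<le> s" using h unfolding gdist_def by auto
  moreover have "(a,j) \<in> E ^^ (LEAST n. (a,j) \<in> E ^^ n)" using ex by (rule LeastI_ex)
  ultimately show "\<exists>n\<le>s. (a,j) \<in> E ^^ n" by blast
next
  assume "\<exists>n\<le>s. (a,j) \<in> E ^^ n"
  then obtain n where n: "n \<le> s" "(a,j) \<in> E ^^ n" by blast
  then have "(LEAST n. (a,j) \<in> E ^^ n) \<le> n" by (intro Least_le)
  then show "gdist E a j \<le> enat s" using n unfolding gdist_def by auto
qed

lemma relpow_mono': "(E::'a rel) \<subseteq> F \<Longrightarrow> (a,b) \<in> E ^^ n \<Longrightarrow> (a,b) \<in> F ^^ n"
proof (induction n arbitrary: b)
  case 0 then show ?case by auto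
next
  case (Suc n)
  then show ?case by (meson relpow_Suc_E relpow_Suc_I subsetD)
qed

lemma path_first_bad:
  "(a,b) \<in> (F::'a rel) ^^ n \<Longrightarrow> (a,b) \<in> G ^^ n \<or>
     (\<exists>k u v. k < n \<and> (a,u) \<in> G ^^ k \<and> (u,v) \<in> F \<and> (u,v) \<notin> G \<and> (v,b) \<in> F ^^ (n - 1 - k))"
proof (induction n arbitrary: a)
  case 0
  then show ?case by simp
next
  case (Suc n)
  from relpow_Suc_E2[OF Suc.prems] obtain y where y: "(a,y) \<in> F" "(y,b) \<in> F ^^ n" by blast
  show ?case
  proof (cases "(a,y) \<in> G")
    case False
    then show ?thesis using y by (intro disjI2 exI[of _ 0]) auto
  next
    case True
    from Suc.IH[OF y(2)] show ?thesis
    proof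
      assume "(y,b) \<in> G ^^ n"
      then show ?thesis using True by (meson relpow_Suc_I2)
    next
      assume "\<exists>k u v. k < n \<and> (y,u) \<in> G ^^ k \<and> (u,v) \<in> F \<and> (u,v) \<notin> G \<and> (v,b) \<in> F ^^ (n - 1 - k)"
      then obtain k u v where "k < n" "(y,u) \<in> G ^^ k" "(u,v) \<in> F" "(u,v) \<notin> G" "(v,b) \<in> F ^^ (n - 1 - k)" by blast
      moreover have "(a,u) \<in> G ^^ Suc k" using True \<open>(y,u) \<in> G ^^ k\<close> by (rule relpow_Suc_I2)
      moreover have "Suc n - 1 - Suc k = n - 1 - k" by simp
      ultimately show ?thesis by (metis Suc_less_eq)
    qed
  qed
qed

lemma path_last_bad:
  "(a,b) \<in> (F::'a rel) ^^ n \<Longrightarrow> (a,b) \<in> G ^^ n \<or>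
     (\<exists>m u v. m < n \<and> (a,u) \<in> F ^^ (n - 1 - m) \<and> (u,v) \<in> F \<and> (u,v) \<notin> G \<and> (v,b) \<in> G ^^ m)"
proof (induction n arbitrary: b)
  case 0
  then show ?case by simp
next
  case (Suc n)
  from relpow_Suc_E[OF Suc.prems] obtain y where y: "(a,y) \<in> F ^^ n" "(y,b) \<in> F" by blast
  show ?case
  proof (cases "(y,b) \<in> G")
    case False
    then show ?thesis using y by (intro disjI2 exI[of _ 0]) auto
  next
    case True
    from Suc.IH[OF y(1)] show ?thesis
    proof
      assume "(a,y) \<in> G ^^ n"
      then show ?thesis using True by auto
    next
      assume "\<exists>m u v. m < n \<and> (a,u) \<in> F ^^ (n - 1 - m) \<and> (u,v) \<in> F \<and> (u,v) \<notin> G \<and> (v,y) \<in> G ^^ m"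
      then obtain m u v where "m < n" "(a,u) \<in> F ^^ (n - 1 - m)" "(u,v) \<in> F" "(u,v) \<notin> G" "(v,y) \<in> G ^^ m" by blast
      then show ?thesis using True
        by (intro disjI2 exI[of _ "Suc m"] exI[of _ u] exI[of _ v]) auto
    qed
  qed
qed

lemma sym_relpow: "sym G \<Longrightarrow> (v,b) \<in> G ^^ m \<Longrightarrow> (b,v) \<in> G ^^ m"
proof (induction m arbitrary: b)
  case 0 then show ?case by simp
next
  case (Suc m)
  from relpow_Suc_E[OF Suc.prems(2)] obtain y where "(v,y) \<in> G ^^ m" "(y,b) \<in> G" by blast
  then show ?case using Suc by (meson relpow_Suc_I2 symD)
qed

lemma path_bad_near:
  assumes "(a,b) \<in> (F::'a rel) ^^ n" "(a,b) \<notin> G ^^ n" "n \<le> 2*t" "sym G"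
  shows "\<exists>u v. (u,v) \<in> F \<and> (u,v) \<notin> G \<and> ((\<exists>k\<le>t-1. (a,u) \<in> G ^^ k) \<or> (\<exists>k\<le>t-1. (b,v) \<in> G ^^ k))"
proof -
  from path_first_bad[OF assms(1), of G] assms(2) obtain k u v where
    kuv: "k < n" "(a,u) \<in> G ^^ k" "(u,v) \<in> F" "(u,v) \<notin> G" "(v,b) \<in> F ^^ (n - 1 - k)" by blast
  show ?thesis
  proof (cases "k \<le> t - 1")
    case True then show ?thesis using kuv by blast
  next
    case False
    hence len: "n - 1 - k \<le> t - 1" using assms(3) kuv(1) by linarith
    from path_last_bad[OF kuv(5), of G] show ?thesis
    proof
      assume "(v,b) \<in> G ^^ (n - 1 - k)"
      then show ?thesis using kuv len sym_relpow[OF assms(4)] by blast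
    next
      assume "\<exists>m u1 v1. m < n - 1 - k \<and> (v,u1) \<in> F ^^ (n - 1 - k - 1 - m) \<and> (u1,v1) \<in> F \<and> (u1,v1) \<notin> G \<and> (v1,b) \<in> G ^^ m"
      then obtain m u' v' where m: "m < n - 1 - k" "(u',v') \<in> F" "(u',v') \<notin> G" "(v',b) \<in> G ^^ m" by blast
      have "(b,v') \<in> G ^^ m" using sym_relpow[OF assms(4) m(4)] .
      moreover have "m \<le> t - 1" using m(1) len by linarith
      ultimately show ?thesis using m(2,3) by blast
    qed
  qed
qed



definition cf :: "real \<Rightarrow> real \<Rightarrow> bool \<times> bool \<times> bool \<Rightarrow> real" where
  "cf p p' = (\<lambda>v.
     if v = (True, True, False) then min p p'
     else if v = (True, False, True) then p - min p p'
     else if v = (False, True, True) then max p p' - p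
     else if v = (False, False, False) then 1 - max p p'
     else 0)"

lemma UNIV_b3: "(UNIV :: (bool \<times> bool \<times> bool) set) =
  {(True,True,False),(True,False,True),(False,True,True),(False,False,False),
   (True,True,True),(True,False,False),(False,True,False),(False,False,True)}"
  by (auto simp: UNIV_bool)

lemma pmf_coup:
  assumes "0 \<le> p" "p \<le> 1" "0 \<le> p'" "p' \<le> 1"
  shows "pmf (coup p p') v = cf p p' v"
proof -
  have nn: "\<And>x. 0 \<le> cf p p' x" using assms unfolding cf_def by auto
  have "(\<integral>\<^sup>+x. ennreal (cf p p' x) \<partial>count_space UNIV) = (\<Sum>x\<in>UNIV. ennreal (cf p p' x))"
    by (rule nn_integral_count_space_finite) simp
  also have "\<dots> = ennreal (\<Sum>x\<in>UNIV. cf p p' x)" using nn by (simp add: sum_ennreal)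
  also have "(\<Sum>x\<in>UNIV. cf p p' x) = 1"
    unfolding UNIV_b3 by (simp add: cf_def)
  finally have "(\<integral>\<^sup>+x. ennreal (cf p p' x) \<partial>count_space UNIV) = 1" by simp
  then show ?thesis unfolding coup_def cf_def[symmetric]
    using pmf_embed_pmf[of "cf p p'"] nn by blast
qed

lemma set_coup:
  assumes "0 \<le> p" "p \<le> 1" "0 \<le> p'" "p' \<le> 1" "v \<in> set_pmf (coup p p')"
  shows "snd (snd v) \<longleftrightarrow> fst v \<noteq> fst (snd v)"
proof -
  have "cf p p' v \<noteq> 0" using assms pmf_coup[OF assms(1-4)] by (simp add: set_pmf_eq)
  then show ?thesis unfolding cf_def
    by (cases v) (auto split: if_splits)
qed

lemma coup_K:
  assumes "0 \<le> p" "p \<le> 1" "0 \<le> p'" "p' \<le> 1"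
  shows "measure_pmf.prob (coup p p') {v. snd (snd v)} = \<bar>p - p'\<bar>"
proof -
  have "{v::bool\<times>bool\<times>bool. snd (snd v)} = {(True,False,True),(False,True,True),(True,True,True),(False,False,True)}"
    by auto
  then show ?thesis using assms
    by (simp add: measure_measure_pmf_finite pmf_coup cf_def)
qed

lemma coup_notX:
  assumes "0 \<le> p" "p \<le> 1" "0 \<le> p'" "p' \<le> 1"
  shows "measure_pmf.prob (coup p p') {v. \<not> fst v} = 1 - p"
proof -
  have "{v::bool\<times>bool\<times>bool. \<not> fst v} = {(False,True,True),(False,False,False),(False,True,False),(False,False,True)}"
    by auto
  then show ?thesis using assms
    by (simp add: measure_measure_pmf_finite pmf_coup cf_def)
qed



lemma finite_pairsN: "finite (pairsN N)"
  by (rule finite_subset[of _ "{..<N} \<times> {..<N}"]) (auto simp: pairsN_def)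

lemma wN_nonneg:
  assumes pos: "\<forall>i<N. 0 < lam N i" and "i < N" "j < N"
  shows "0 \<le> wN lam N i j"
proof -
  have "0 < lN lam N" unfolding lN_def using pos assms(2)
    by (intro sum_pos) auto
  then show ?thesis unfolding wN_def using pos assms(2,3) by (simp add: less_imp_le)
qed

lemma pN_range:
  assumes pos: "\<forall>i<N. 0 < lam N i" and "i < N" "j < N"
  shows "0 \<le> pN lam N i j \<and> pN lam N i j \<le> 1"
  using wN_nonneg[where lam=lam and N=N, OF assms] unfolding pN_def by auto

lemma pN'_range:
  assumes pos: "\<forall>i<N. 0 < lam N i" and hr: "\<forall>x\<ge>0. 0 \<le> h x \<and> h x \<le> 1" and "i < N" "j < N"
  shows "0 \<le> pN' h lam N i j \<and> pN' h lam N i j \<le> 1"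
  using wN_nonneg[where lam=lam and N=N, OF pos assms(3,4)] hr unfolding pN'_def by auto

lemma edge_support:
  assumes pos: "\<forall>i<N. 0 < lam N i" and hr: "\<forall>x\<ge>0. 0 \<le> h x \<and> h x \<le> 1"
    and om: "\<omega> \<in> set_pmf (edge_pmf h lam N)"
  shows "\<And>x. x \<notin> pairsN N \<Longrightarrow> \<omega> x = (False,False,False)"
    and "\<And>x. x \<in> pairsN N \<Longrightarrow> \<omega> x \<in> set_pmf (coup (pN lam N (fst x) (snd x)) (pN' h lam N (fst x) (snd x)))"
  using om unfolding edge_pmf_def set_Pi_pmf[OF finite_pairsN] PiE_dflt_def
  by (auto simp: case_prod_beta)

lemma Kc_iff:
  assumes pos: "\<forall>i<N. 0 < lam N i" and hr: "\<forall>x\<ge>0. 0 \<le> h x \<and> h x \<le> 1"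
    and om: "\<omega> \<in> set_pmf (edge_pmf h lam N)"
  shows "Kc \<omega> i j \<longleftrightarrow> (Xhat \<omega> i j \<noteq> Xhat' \<omega> i j)"
proof (cases "(min i j, max i j) \<in> pairsN N \<and> i \<noteq> j")
  case True
  let ?x = "(min i j, max i j)"
  have lt: "min i j < N" "max i j < N" using True by (auto simp: pairsN_def)
  have "\<omega> ?x \<in> set_pmf (coup (pN lam N (min i j) (max i j)) (pN' h lam N (min i j) (max i j)))"
    using edge_support(2)[where lam=lam and N=N, OF pos hr om True[THEN conjunct1]] by simp
  from set_coup[OF _ _ _ _ this] pN_range[where lam=lam and N=N, OF pos lt] pN'_range[where lam=lam and N=N, OF pos hr lt]
  show ?thesis using True unfolding Kc_def Xhat_def Xhat'_def by auto
next
  case False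
  then show ?thesis using edge_support(1)[where lam=lam and N=N, OF pos hr om, of "(min i j, max i j)"]
    unfolding Kc_def Xhat_def Xhat'_def by auto
qed

lemma Kc_lt:
  assumes pos: "\<forall>i<N. 0 < lam N i" and hr: "\<forall>x\<ge>0. 0 \<le> h x \<and> h x \<le> 1"
    and om: "\<omega> \<in> set_pmf (edge_pmf h lam N)" and K: "Kc \<omega> i j"
  shows "i < N \<and> j < N \<and> i \<noteq> j"
proof -
  have "(min i j, max i j) \<in> pairsN N"
  proof (rule ccontr)
    assume "(min i j, max i j) \<notin> pairsN N"
    from edge_support(1)[where lam=lam and N=N, OF pos hr om this] K show False unfolding Kc_def by auto
  qed
  then show ?thesis using K unfolding pairsN_def Kc_def by auto
qed

lemma Kc_sym: "Kc \<omega> i j = Kc \<omega> j i"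
  unfolding Kc_def by (auto simp: min.commute max.commute)

lemma sym_edgesG: "sym (edgesG \<omega>)"
  unfolding edgesG_def Xhat_def sym_def by (auto simp: min.commute max.commute)

lemma sym_edgesG': "sym (edgesG' \<omega>)"
  unfolding edgesG'_def Xhat'_def sym_def by (auto simp: min.commute max.commute)

lemma eventA_low:
  assumes pos: "\<forall>i<N. 0 < lam N i" and hr: "\<forall>x\<ge>0. 0 \<le> h x \<and> h x \<le> 1"
    and om: "\<omega> \<in> set_pmf (edge_pmf h lam N)" and A: "\<omega> \<in> eventA lam \<xi> N" and K: "Kc \<omega> i j"
  shows "lam N i \<le> real N powr \<xi>"
proof (rule ccontr)
  assume hi: "\<not> lam N i \<le> real N powr \<xi>"
  have lt: "i < N \<and> j < N \<and> i \<noteq> j" using Kc_lt[where lam=lam and N=N, OF pos hr om K] .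
  have "Kdeg \<omega> N i * (if lam N i > real N powr \<xi> then 1 else 0) = 0"
    using A lt unfolding eventA_def by (simp add: sum_eq_0_iff)
  then have "Kdeg \<omega> N i = 0" using hi by simp
  then have "(if Kc \<omega> i j then 1 else 0::nat) = 0"
    unfolding Kdeg_def using lt by (simp add: sum_eq_0_iff)
  then show False using K by simp
qed

definition Badp :: "(nat \<Rightarrow> nat \<Rightarrow> real) \<Rightarrow> real \<Rightarrow> nat \<Rightarrow> nat \<Rightarrow> config \<Rightarrow> nat \<Rightarrow> bool" where
  "Badp lam \<xi> N t \<omega> a = (\<exists>i j. i < N \<and> j < N \<and> i \<noteq> j \<and> Kc \<omega> i j \<and> lam N i \<le> real N powr \<xi>
      \<and> lam N j \<le> real N powr \<xi> \<and> gdist (edgesG \<omega>) a i \<le> enat (t - 1))"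

lemma gdist_enat:
  assumes "gdist E a b = enat H"
  shows "(a,b) \<in> E ^^ H" "\<And>n. n < H \<Longrightarrow> (a,b) \<notin> E ^^ n"
proof -
  have ex: "\<exists>n. (a,b) \<in> E ^^ n" using assms unfolding gdist_def by (auto split: if_splits)
  then have H: "H = (LEAST n. (a,b) \<in> E ^^ n)" using assms unfolding gdist_def by auto
  show "(a,b) \<in> E ^^ H" unfolding H using ex by (rule LeastI_ex)
  show "\<And>n. n < H \<Longrightarrow> (a,b) \<notin> E ^^ n" unfolding H by (rule not_less_Least)
qed

lemma gdist_eq_enatI:
  assumes "(a,b) \<in> E ^^ H" "\<And>n. n < H \<Longrightarrow> (a,b) \<notin> E ^^ n"
  shows "gdist E a b = enat H"
proof -
  have "(LEAST n. (a,b) \<in> E ^^ n) = H"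
    by (rule Least_equality) (use assms in \<open>auto simp: not_less[symmetric]\<close>)
  then show ?thesis using assms unfolding gdist_def by auto
qed

lemma bad_cover:
  assumes pos: "\<forall>i<N. 0 < lam N i" and hr: "\<forall>x\<ge>0. 0 \<le> h x \<and> h x \<le> 1"
    and om: "\<omega> \<in> set_pmf (edge_pmf h lam N)" and A: "\<omega> \<in> eventA lam \<xi> N" and t: "1 \<le> t"
    and le: "gdist (edgesG \<omega>) a1 a2 \<le> enat (2*t)"
    and ne: "gdist (edgesG \<omega>) a1 a2 \<noteq> gdist (edgesG' \<omega>) a1 a2"
  shows "Badp lam \<xi> N t \<omega> a1 \<or> Badp lam \<xi> N t \<omega> a2"
proof -
  let ?E = "edgesG \<omega>" and ?E' = "edgesG' \<omega>"
  define G where "G = ?E \<inter> ?E'"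
  have symG: "sym G" unfolding G_def using sym_edgesG sym_edgesG' by (metis sym_Int)
  obtain H where H: "gdist ?E a1 a2 = enat H" using le by (cases "gdist ?E a1 a2") auto
  have HE: "(a1,a2) \<in> ?E ^^ H" "\<And>n. n < H \<Longrightarrow> (a1,a2) \<notin> ?E ^^ n" using gdist_enat[OF H] by auto
  have H2: "H \<le> 2*t" using H le by simp
  obtain F n where Fn: "(a1,a2) \<in> F ^^ n" "(a1,a2) \<notin> G ^^ n" "n \<le> 2*t" "F = ?E \<or> F = ?E'"
  proof (cases "\<exists>L<H. (a1,a2) \<in> ?E' ^^ L")
    case True
    then obtain L where L: "L < H" "(a1,a2) \<in> ?E' ^^ L" by blast
    have "(a1,a2) \<notin> G ^^ L"
    proof
      assume "(a1,a2) \<in> G ^^ L"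
      then have "(a1,a2) \<in> ?E ^^ L" by (rule relpow_mono'[rotated]) (auto simp: G_def)
      then show False using HE(2)[OF L(1)] by simp
    qed
    then show ?thesis using that[of L ?E'] L H2 by auto
  next
    case False
    have "(a1,a2) \<notin> ?E' ^^ H"
    proof
      assume "(a1,a2) \<in> ?E' ^^ H"
      then have "gdist ?E' a1 a2 = enat H" using False by (intro gdist_eq_enatI) auto
      then show False using ne H by simp
    qed
    moreover have "(a1,a2) \<in> G ^^ H \<Longrightarrow> (a1,a2) \<in> ?E' ^^ H"
      by (rule relpow_mono'[rotated]) (auto simp: G_def)
    ultimately have "(a1,a2) \<notin> G ^^ H" by blast
    then show ?thesis using that[of H ?E] HE H2 by auto
  qed
  from path_bad_near[OF Fn(1,2,3) symG] obtain u v where uv: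
    "(u,v) \<in> F" "(u,v) \<notin> G" "(\<exists>k\<le>t-1. (a1,u) \<in> G ^^ k) \<or> (\<exists>k\<le>t-1. (a2,v) \<in> G ^^ k)" by blast
  have "Xhat \<omega> u v \<noteq> Xhat' \<omega> u v" using uv(1,2) Fn(4) unfolding G_def edgesG_def edgesG'_def by auto
  then have K: "Kc \<omega> u v" using Kc_iff[where lam=lam and N=N, OF pos hr om] by simp
  then have K': "Kc \<omega> v u" using Kc_sym by metis
  have lt: "u < N \<and> v < N \<and> u \<noteq> v" using Kc_lt[where lam=lam and N=N, OF pos hr om K] .
  have lowu: "lam N u \<le> real N powr \<xi>" using eventA_low[where lam=lam and N=N, OF pos hr om A K] .
  have lowv: "lam N v \<le> real N powr \<xi>" using eventA_low[where lam=lam and N=N, OF pos hr om A K'] .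
  have GE: "\<And>x y k. (x,y) \<in> G ^^ k \<Longrightarrow> (x,y) \<in> ?E ^^ k"
    by (rule relpow_mono'[rotated]) (auto simp: G_def)
  from uv(3) show ?thesis
  proof
    assume "\<exists>k\<le>t-1. (a1,u) \<in> G ^^ k"
    then have "gdist ?E a1 u \<le> enat (t-1)" using GE by (auto simp: gdist_le_iff)
    then show ?thesis unfolding Badp_def using lt K lowu lowv by blast
  next
    assume "\<exists>k\<le>t-1. (a2,v) \<in> G ^^ k"
    then have "gdist ?E a2 v \<le> enat (t-1)" using GE by (auto simp: gdist_le_iff)
    then show ?thesis unfolding Badp_def using lt K' lowu lowv by blast
  qed
qed



lemma finite_set_coup: "finite (set_pmf (coup p p'))"
  by simp

lemma finite_edge_support: "finite (set_pmf (edge_pmf h lam N))"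
  unfolding edge_pmf_def set_Pi_pmf[OF finite_pairsN]
  by (rule finite_PiE_dflt[OF finite_pairsN]) (auto simp: case_prod_beta)

lemma finite_R_support: "finite (set_pmf (Pi_pmf (pairsN N - {x}) (False,False,False)
     (\<lambda>(i,j). coup (pN lam N i j) (pN' h lam N i j))))"
  using finite_pairsN[of N] by (subst set_Pi_pmf) (auto intro!: finite_PiE_dflt simp: case_prod_beta)

lemma measure_as_sum:
  assumes "finite (set_pmf M)"
  shows "measure_pmf.prob M S = (\<Sum>w\<in>set_pmf M. pmf M w * (if w \<in> S then 1 else 0))"
proof -
  have "measure_pmf.prob M S = measure_pmf.prob M (S \<inter> set_pmf M)" by (simp add: measure_Int_set_pmf)
  also have "\<dots> = sum (pmf M) (S \<inter> set_pmf M)" using assms by (simp add: measure_measure_pmf_finite)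
  also have "\<dots> = (\<Sum>w\<in>set_pmf M. pmf M w * (if w \<in> S then 1 else 0))"
    using assms sum.inter_restrict[of "set_pmf M" "pmf M" S] by (simp add: Int_commute if_distrib cong: if_cong)
  finally show ?thesis .
qed

lemma measure_pair_finite:
  assumes A: "finite (set_pmf A)" and B: "finite (set_pmf B)"
  shows "measure_pmf.prob (pair_pmf A B) T = (\<Sum>a\<in>set_pmf A. pmf A a * measure_pmf.prob B {b. (a,b) \<in> T})"
proof -
  have fin: "finite (set_pmf (pair_pmf A B))" using A B by simp
  have "measure_pmf.prob (pair_pmf A B) T = (\<Sum>z\<in>set_pmf A \<times> set_pmf B. pmf (pair_pmf A B) z * (if z \<in> T then 1 else 0))"
    using measure_as_sum[OF fin] by simp
  also have "\<dots> = (\<Sum>(a,b)\<in>set_pmf A \<times> set_pmf B. pmf A a * (pmf B b * (if (a,b) \<in> T then 1 else 0)))"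
    by (intro sum.cong refl) (clarsimp simp: pmf_pair)
  also have "\<dots> = (\<Sum>a\<in>set_pmf A. \<Sum>b\<in>set_pmf B. pmf A a * (pmf B b * (if (a,b) \<in> T then 1 else 0)))"
    by (rule sum.cartesian_product[symmetric])
  also have "\<dots> = (\<Sum>a\<in>set_pmf A. pmf A a * measure_pmf.prob B {b. (a,b) \<in> T})"
    by (simp add: measure_as_sum[OF B] sum_distrib_left)
  finally show ?thesis .
qed

lemma pair_prod_measure:
  assumes A: "finite (set_pmf A)" and B: "finite (set_pmf B)"
  shows "measure_pmf.prob (pair_pmf A B) (X \<times> Y) = measure_pmf.prob A X * measure_pmf.prob B Y"
proof -
  have "measure_pmf.prob (pair_pmf A B) (X \<times> Y) = (\<Sum>a\<in>set_pmf A. pmf A a * (if a \<in> X then 1 else 0) * measure_pmf.prob B Y)"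
    unfolding measure_pair_finite[OF A B] by (intro sum.cong) auto
  also have "\<dots> = measure_pmf.prob A X * measure_pmf.prob B Y"
    by (simp add: measure_as_sum[OF A] sum_distrib_right)
  finally show ?thesis .
qed

lemma card_pairs: "card {(a1,a2). a1 < N \<and> a2 < (N::nat) \<and> a1 \<noteq> a2} = N * (N - 1)"
proof -
  have "{(a1,a2). a1 < N \<and> a2 < (N::nat) \<and> a1 \<noteq> a2} = Sigma {..<N} (\<lambda>a. {..<N} - {a})" by auto
  then show ?thesis by (simp add: card_SigmaI)
qed

lemma marg_fst:
  assumes N: "2 \<le> N"
  shows "map_pmf fst (node_pair_pmf N) = pmf_of_set {..<N}"
proof (rule pmf_eqI)
  fix a
  let ?S = "{(a1,a2). a1 < N \<and> a2 < (N::nat) \<and> a1 \<noteq> a2}"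
  have fin: "finite ?S" by (rule finite_subset[of _ "{..<N} \<times> {..<N}"]) auto
  have "(0,1) \<in> ?S" using N by auto
  then have ne: "?S \<noteq> {}" by blast
  have "pmf (map_pmf fst (node_pair_pmf N)) a = real (card (?S \<inter> fst -` {a})) / real (card ?S)"
    unfolding node_pair_pmf_def pmf_map using fin ne by (simp add: measure_pmf_of_set)
  also have "\<dots> = indicator {..<N} a / real (card {..<N})"
  proof (cases "a < N")
    case True
    have "?S \<inter> fst -` {a} = {a} \<times> ({..<N} - {a})" using True by auto
    then have "card (?S \<inter> fst -` {a}) = N - 1" using True by (simp add: card_cartesian_product)
    moreover have "N - 1 > 0" using N by simp
    ultimately show ?thesis using True N by (simp add: card_pairs)
  next
    case False
    then have "?S \<inter> fst -` {a} = {}" by auto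
    then show ?thesis using False by simp
  qed
  also have "\<dots> = pmf (pmf_of_set {..<N}) a"
  proof -
    have "{..<N} \<noteq> {}" using N by (metis lessThan_empty_iff not_numeral_le_zero)
    then show ?thesis by (subst pmf_of_set) auto
  qed
  finally show "pmf (map_pmf fst (node_pair_pmf N)) a = pmf (pmf_of_set {..<N}) a" .
qed

lemma marg_snd:
  assumes N: "2 \<le> N"
  shows "map_pmf snd (node_pair_pmf N) = pmf_of_set {..<N}"
proof -
  let ?S = "{(a1,a2). a1 < N \<and> a2 < (N::nat) \<and> a1 \<noteq> a2}"
  have fin: "finite ?S" by (rule finite_subset[of _ "{..<N} \<times> {..<N}"]) auto
  have "map_pmf (\<lambda>(x,y). (y,x)) (node_pair_pmf N) = pmf_of_set ((\<lambda>(x,y). (y,x)) ` ?S)"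
    unfolding node_pair_pmf_def using fin N
  proof (intro map_pmf_of_set_inj)
    have "(0,1) \<in> ?S" using N by auto
    then show "?S \<noteq> {}" by blast
  qed (auto simp: inj_on_def fin)
  also have "(\<lambda>(x,y). (y,x)) ` ?S = ?S" by auto
  finally have sw: "map_pmf (\<lambda>(x,y). (y,x)) (node_pair_pmf N) = node_pair_pmf N" unfolding node_pair_pmf_def .
  have "map_pmf snd (node_pair_pmf N) = map_pmf fst (map_pmf (\<lambda>(x,y). (y,x)) (node_pair_pmf N))"
    by (simp add: pmf.map_comp o_def case_prod_beta)
  then show ?thesis using sw marg_fst[OF N] by simp
qed

lemma pair_marg1:
  assumes N: "2 \<le> N"
  shows "measure_pmf.prob (pair_pmf (node_pair_pmf N) Q) {((a1,a2),\<omega>). P a1 \<omega>}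
       = measure_pmf.prob (pair_pmf (pmf_of_set {..<N}) Q) {(a,\<omega>). P a \<omega>}"
proof -
  have "pair_pmf (pmf_of_set {..<N}) Q = map_pmf (apfst fst) (pair_pmf (node_pair_pmf N) Q)"
    using marg_fst[OF N] pair_map_pmf1[of fst "node_pair_pmf N" Q] by simp
  then have "measure_pmf.prob (pair_pmf (pmf_of_set {..<N}) Q) {(a,\<omega>). P a \<omega>}
     = measure_pmf.prob (pair_pmf (node_pair_pmf N) Q) {x. P (fst (fst x)) (snd x)}"
    by (simp add: vimage_def case_prod_beta apfst_def map_prod_def)
  moreover have "{((a1,a2),\<omega>). P a1 \<omega>} = {x. P (fst (fst x)) (snd x)}" by auto
  ultimately show ?thesis by metis
qed

lemma pair_marg2:
  assumes N: "2 \<le> N"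
  shows "measure_pmf.prob (pair_pmf (node_pair_pmf N) Q) {((a1,a2),\<omega>). P a2 \<omega>}
       = measure_pmf.prob (pair_pmf (pmf_of_set {..<N}) Q) {(a,\<omega>). P a \<omega>}"
proof -
  have "pair_pmf (pmf_of_set {..<N}) Q = map_pmf (apfst snd) (pair_pmf (node_pair_pmf N) Q)"
    using marg_snd[OF N] pair_map_pmf1[of snd "node_pair_pmf N" Q] by simp
  then have "measure_pmf.prob (pair_pmf (pmf_of_set {..<N}) Q) {(a,\<omega>). P a \<omega>}
     = measure_pmf.prob (pair_pmf (node_pair_pmf N) Q) {x. P (snd (fst x)) (snd x)}"
    by (simp add: vimage_def case_prod_beta apfst_def map_prod_def)
  moreover have "{((a1,a2),\<omega>). P a2 \<omega>} = {x. P (snd (fst x)) (snd x)}" by auto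
  ultimately show ?thesis by metis
qed



definition pp :: "(real \<Rightarrow> real) \<Rightarrow> (nat \<Rightarrow> nat \<Rightarrow> real) \<Rightarrow> nat \<Rightarrow> nat \<times> nat \<Rightarrow> (bool \<times> bool \<times> bool) pmf" where
  "pp h lam N = (\<lambda>(i,j). coup (pN lam N i j) (pN' h lam N i j))"

definition RR :: "(real \<Rightarrow> real) \<Rightarrow> (nat \<Rightarrow> nat \<Rightarrow> real) \<Rightarrow> nat \<Rightarrow> nat \<times> nat \<Rightarrow> config pmf" where
  "RR h lam N x = Pi_pmf (pairsN N - {x}) (False,False,False) (pp h lam N)"

lemma Q_decomp:
  assumes "x \<in> pairsN N"
  shows "edge_pmf h lam N = map_pmf (\<lambda>(y,f). f(x:=y)) (pair_pmf (pp h lam N x) (RR h lam N x))"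
proof -
  have "pairsN N = insert x (pairsN N - {x})" using assms by auto
  then have "edge_pmf h lam N = Pi_pmf (insert x (pairsN N - {x})) (False,False,False) (pp h lam N)"
    unfolding edge_pmf_def pp_def by simp
  also have "\<dots> = map_pmf (\<lambda>(y,f). f(x:=y)) (pair_pmf (pp h lam N x) (RR h lam N x))"
    unfolding RR_def using finite_pairsN[of N] by (intro Pi_pmf_insert) auto
  finally show ?thesis .
qed

lemma finite_RR: "finite (set_pmf (RR h lam N x))"
  unfolding RR_def pp_def by (rule finite_R_support)

lemma finite_pp: "finite (set_pmf (pp h lam N x))"
  unfolding pp_def by (simp add: case_prod_beta)

lemma core1:
  assumes x: "x \<in> pairsN N"
    and imp: "\<And>w. \<Phi> w \<Longrightarrow> snd (snd (w x)) \<and> Bs (w(x := (False,False,False)))"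
  shows "measure_pmf.prob (edge_pmf h lam N) {w. \<Phi> w}
     \<le> measure_pmf.prob (pp h lam N x) {y. snd (snd y)} * measure_pmf.prob (RR h lam N x) {f. Bs (f(x := (False,False,False)))}"
proof -
  let ?g = "\<lambda>(y::bool\<times>bool\<times>bool,f::config). f(x:=y)"
  have "measure_pmf.prob (edge_pmf h lam N) {w. \<Phi> w}
      = measure_pmf.prob (pair_pmf (pp h lam N x) (RR h lam N x)) (?g -` {w. \<Phi> w})"
    by (subst Q_decomp[OF x]) simp
  also have "\<dots> \<le> measure_pmf.prob (pair_pmf (pp h lam N x) (RR h lam N x))
        ({y. snd (snd y)} \<times> {f. Bs (f(x := (False,False,False)))})"
  proof (rule measure_pmf.finite_measure_mono)
    show "?g -` {w. \<Phi> w} \<subseteq> {y. snd (snd y)} \<times> {f. Bs (f(x := (False,False,False)))}"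
    proof
      fix z assume z: "z \<in> ?g -` {w. \<Phi> w}"
      obtain y :: "bool\<times>bool\<times>bool" and f :: config where zyf: "z = (y,f)" by (cases z)
      have "\<Phi> (f(x:=y))" using z zyf by simp
      from imp[OF this] show "z \<in> {y. snd (snd y)} \<times> {f. Bs (f(x := (False,False,False)))}" using zyf by auto
    qed
  qed simp
  also have "\<dots> = measure_pmf.prob (pp h lam N x) {y. snd (snd y)} * measure_pmf.prob (RR h lam N x) {f. Bs (f(x := (False,False,False)))}"
    by (rule pair_prod_measure[OF finite_pp finite_RR])
  finally show ?thesis .
qed

lemma edgesG_upd: "\<not> fst y \<Longrightarrow> edgesG (f(x := y)) = edgesG (f(x := (False,False,False)))"
  unfolding edgesG_def Xhat_def by auto

definition edge_only :: "(config \<Rightarrow> bool) \<Rightarrow> bool" where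
  "edge_only B = (\<forall>w w'. edgesG w = edgesG w' \<longrightarrow> B w = B w')"

lemma core2:
  assumes x: "x \<in> pairsN N" and eo: "edge_only Bs"
  shows "measure_pmf.prob (pp h lam N x) {y. \<not> fst y} * measure_pmf.prob (RR h lam N x) {f. Bs (f(x := (False,False,False)))}
     \<le> measure_pmf.prob (edge_pmf h lam N) {w. Bs w}"
proof -
  let ?g = "\<lambda>(y::bool\<times>bool\<times>bool,f::config). f(x:=y)"
  have "measure_pmf.prob (pp h lam N x) {y. \<not> fst y} * measure_pmf.prob (RR h lam N x) {f. Bs (f(x := (False,False,False)))}
     = measure_pmf.prob (pair_pmf (pp h lam N x) (RR h lam N x)) ({y. \<not> fst y} \<times> {f. Bs (f(x := (False,False,False)))})"
    by (rule pair_prod_measure[OF finite_pp finite_RR, symmetric])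
  also have "\<dots> \<le> measure_pmf.prob (pair_pmf (pp h lam N x) (RR h lam N x)) (?g -` {w. Bs w})"
  proof (rule measure_pmf.finite_measure_mono)
    show "{y. \<not> fst y} \<times> {f. Bs (f(x := (False,False,False)))} \<subseteq> ?g -` {w. Bs w}"
    proof
      fix z assume z: "z \<in> {y::bool\<times>bool\<times>bool. \<not> fst y} \<times> {f. Bs (f(x := (False,False,False)))}"
      obtain y :: "bool\<times>bool\<times>bool" and f :: config where zyf: "z = (y,f)" by (cases z)
      have a: "\<not> fst y" "Bs (f(x := (False,False,False)))" using z zyf by auto
      have "edgesG (f(x:=y)) = edgesG (f(x := (False,False,False)))" by (rule edgesG_upd) (fact a(1))
      then have "Bs (f(x:=y)) = Bs (f(x := (False,False,False)))" using eo unfolding edge_only_def by blast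
      then show "z \<in> ?g -` {w. Bs w}" using a(2) zyf by simp
    qed
  qed simp
  also have "\<dots> = measure_pmf.prob (edge_pmf h lam N) {w. Bs w}"
    by (subst Q_decomp[OF x]) simp
  finally show ?thesis .
qed



definition nball :: "config \<Rightarrow> nat \<Rightarrow> nat \<Rightarrow> nat \<Rightarrow> nat set" where
  "nball w N a s = {j. j < N \<and> gdist (edgesG w) a j \<le> enat s}"

definition B1 :: "real \<Rightarrow> nat \<Rightarrow> nat \<Rightarrow> nat \<Rightarrow> nat \<Rightarrow> config \<Rightarrow> bool" where
  "B1 b N s a i w = (i \<in> nball w N a s \<and> real (card (nball w N a s)) \<le> real N powr b)"

lemma edge_only_B1: "edge_only (B1 b N s a i)"
  unfolding edge_only_def B1_def nball_def by simp

lemma edge_only_disj: "edge_only P \<Longrightarrow> edge_only Q \<Longrightarrow> edge_only (\<lambda>w. P w \<or> Q w)"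
  unfolding edge_only_def by metis

lemma edges_sub1: "edgesG (w(x := (False,False,False))) \<subseteq> edgesG w"
  unfolding edgesG_def Xhat_def by auto

lemma edges_sub2: "x = (min i j, max i j) \<Longrightarrow> edgesG w \<subseteq> edgesG (w(x := (False,False,False))) \<union> {(i,j),(j,i)}"
  unfolding edgesG_def Xhat_def by (auto simp: min_def max_def split: if_splits)

lemma path_via:
  assumes "(E::'a rel) \<subseteq> E0 \<union> {(i,j),(j,i)}"
  shows "(a,v) \<in> E ^^ n \<Longrightarrow> (a,v) \<in> E0 ^^ n \<or> (\<exists>m<n. (a,i) \<in> E0 ^^ m \<or> (a,j) \<in> E0 ^^ m)"
proof (induction n arbitrary: v)
  case 0 then show ?case by auto
next
  case (Suc n)
  from relpow_Suc_E[OF Suc.prems] obtain y where y: "(a,y) \<in> E ^^ n" "(y,v) \<in> E" by blast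
  from Suc.IH[OF y(1)] show ?case
  proof
    assume ay: "(a,y) \<in> E0 ^^ n"
    show ?thesis
    proof (cases "(y,v) \<in> E0")
      case True then show ?thesis using ay by auto
    next
      case False
      then have "y = i \<or> y = j" using y(2) assms by auto
      then show ?thesis using ay by auto
    qed
  next
    assume "\<exists>m<n. (a,i) \<in> E0 ^^ m \<or> (a,j) \<in> E0 ^^ m"
    then show ?thesis using less_SucI by blast
  qed
qed

lemma nball_mono: "nball (w(x := (False,False,False))) N a s \<subseteq> nball w N a s"
proof
  fix j assume "j \<in> nball (w(x := (False,False,False))) N a s"
  then obtain n where n: "j < N" "n \<le> s" "(a,j) \<in> edgesG (w(x := (False,False,False))) ^^ n"
    unfolding nball_def gdist_le_iff by blast
  have "(a,j) \<in> edgesG w ^^ n" by (rule relpow_mono'[OF edges_sub1 n(3)])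
  then show "j \<in> nball w N a s" unfolding nball_def gdist_le_iff using n(1,2) by blast
qed

lemma nball_split:
  assumes "x = (min i j, max i j)" "i \<in> nball w N a s" "j < N"
  shows "i \<in> nball (w(x := (False,False,False))) N a s \<or> j \<in> nball (w(x := (False,False,False))) N a s"
proof -
  from assms(2) obtain n where n: "n \<le> s" "(a,i) \<in> edgesG w ^^ n" "i < N"
    unfolding nball_def gdist_le_iff by blast
  let ?E0 = "edgesG (w(x := (False,False,False)))"
  from path_via[OF edges_sub2[OF assms(1)] n(2)]
  have "\<exists>m\<le>s. (a,i) \<in> ?E0 ^^ m \<or> (a,j) \<in> ?E0 ^^ m"
  proof
    assume "(a,i) \<in> ?E0 ^^ n" then show ?thesis using n(1) by blast
  next
    assume "\<exists>m<n. (a,i) \<in> ?E0 ^^ m \<or> (a,j) \<in> ?E0 ^^ m"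
    then obtain m where "m < n" "(a,i) \<in> ?E0 ^^ m \<or> (a,j) \<in> ?E0 ^^ m" by blast
    then show ?thesis using n(1) by (intro exI[of _ m]) simp
  qed
  then show ?thesis unfolding nball_def gdist_le_iff using n(3) assms(3) by blast
qed

lemma finite_nball: "finite (nball w N a s)"
  unfolding nball_def by simp

lemma core3:
  assumes ij: "i < N" "j < N" "i \<noteq> j" and x: "x = (min i j, max i j)"
    and eps: "measure_pmf.prob (pp h lam N x) {y. snd (snd y)} \<le> eps"
    and half: "measure_pmf.prob (pp h lam N x) {y. \<not> fst y} \<ge> 1/2"
  shows "measure_pmf.prob (edge_pmf h lam N) {w. Kc w i j \<and> B1 b N s a i w}
     \<le> eps * 2 * (measure_pmf.prob (edge_pmf h lam N) {w. B1 b N s a i w}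
                  + measure_pmf.prob (edge_pmf h lam N) {w. B1 b N s a j w})"
proof -
  let ?d = "(False,False,False)"
  let ?Bs = "\<lambda>w. B1 b N s a i w \<or> B1 b N s a j w"
  have xp: "x \<in> pairsN N" using ij x unfolding pairsN_def by (auto simp: min_def max_def)
  have imp: "snd (snd (w x)) \<and> ?Bs (w(x := ?d))" if "Kc w i j \<and> B1 b N s a i w" for w
  proof -
    have "snd (snd (w x))" using that x unfolding Kc_def by simp
    moreover have "card (nball (w(x := ?d)) N a s) \<le> card (nball w N a s)"
      by (rule card_mono[OF finite_nball nball_mono])
    moreover have "i \<in> nball (w(x := ?d)) N a s \<or> j \<in> nball (w(x := ?d)) N a s"
      using nball_split[OF x _ ij(2)] that unfolding B1_def by blast
    ultimately show ?thesis using that unfolding B1_def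
      by (meson of_nat_le_iff order_trans)
  qed
  have c1: "measure_pmf.prob (edge_pmf h lam N) {w. Kc w i j \<and> B1 b N s a i w}
     \<le> measure_pmf.prob (pp h lam N x) {y. snd (snd y)} * measure_pmf.prob (RR h lam N x) {f. ?Bs (f(x := ?d))}"
    by (rule core1[OF xp]) (use imp in blast)
  have c2: "measure_pmf.prob (pp h lam N x) {y. \<not> fst y} * measure_pmf.prob (RR h lam N x) {f. ?Bs (f(x := ?d))}
     \<le> measure_pmf.prob (edge_pmf h lam N) {w. ?Bs w}"
    by (rule core2[OF xp edge_only_disj[OF edge_only_B1 edge_only_B1]])
  have c3: "measure_pmf.prob (edge_pmf h lam N) {w. ?Bs w} \<le>
     measure_pmf.prob (edge_pmf h lam N) {w. B1 b N s a i w} + measure_pmf.prob (edge_pmf h lam N) {w. B1 b N s a j w}"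
  proof -
    have "{w. ?Bs w} = {w. B1 b N s a i w} \<union> {w. B1 b N s a j w}" by auto
    then show ?thesis using measure_subadditive[where A="{w. B1 b N s a i w}" and B="{w. B1 b N s a j w}" and M="measure_pmf (edge_pmf h lam N)"]
      by (simp add: measure_pmf.emeasure_finite)
  qed
  let ?PR = "measure_pmf.prob (RR h lam N x) {f. ?Bs (f(x := ?d))}"
  have PR0: "0 \<le> ?PR" by simp
  have "(1/2) * ?PR \<le> measure_pmf.prob (pp h lam N x) {y. \<not> fst y} * ?PR"
    using half PR0 by (intro mult_right_mono) auto
  then have "(1/2) * ?PR \<le> measure_pmf.prob (edge_pmf h lam N) {w. B1 b N s a i w} + measure_pmf.prob (edge_pmf h lam N) {w. B1 b N s a j w}"
    using c2 c3 by (meson order_trans)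
  then have "2 * ((1/2) * ?PR) \<le> 2 * (measure_pmf.prob (edge_pmf h lam N) {w. B1 b N s a i w} + measure_pmf.prob (edge_pmf h lam N) {w. B1 b N s a j w})"
    by (rule mult_left_mono) simp
  then have PR: "?PR \<le> 2 * (measure_pmf.prob (edge_pmf h lam N) {w. B1 b N s a i w} + measure_pmf.prob (edge_pmf h lam N) {w. B1 b N s a j w})"
    by simp
  have "measure_pmf.prob (edge_pmf h lam N) {w. Kc w i j \<and> B1 b N s a i w} \<le> eps * ?PR"
    using c1 eps PR0 by (meson mult_right_mono order_trans)
  also have "\<dots> \<le> eps * (2 * (measure_pmf.prob (edge_pmf h lam N) {w. B1 b N s a i w} + measure_pmf.prob (edge_pmf h lam N) {w. B1 b N s a j w}))"
  proof -
    have "0 \<le> eps" using eps order_trans measure_nonneg by blast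
    then show ?thesis using PR by (intro mult_left_mono) auto
  qed
  finally show ?thesis by (simp add: mult.assoc)
qed

lemma sum_B1:
  assumes "0 < N"
  shows "(\<Sum>i<N. measure_pmf.prob (edge_pmf h lam N) {w. B1 b N s a i w}) \<le> real N powr b"
proof -
  let ?Q = "edge_pmf h lam N"
  have fin: "finite (set_pmf ?Q)" by (rule finite_edge_support)
  have "(\<Sum>i<N. measure_pmf.prob ?Q {w. B1 b N s a i w})
      = (\<Sum>i<N. \<Sum>w\<in>set_pmf ?Q. pmf ?Q w * (if B1 b N s a i w then 1 else 0))"
    by (simp add: measure_as_sum[OF fin])
  also have "\<dots> = (\<Sum>w\<in>set_pmf ?Q. pmf ?Q w * (\<Sum>i<N. (if B1 b N s a i w then 1 else 0)))"
    by (subst sum.swap) (simp add: sum_distrib_left)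
  also have "\<dots> \<le> (\<Sum>w\<in>set_pmf ?Q. pmf ?Q w * real N powr b)"
  proof (intro sum_mono mult_left_mono)
    fix w
    show "(\<Sum>i<N. (if B1 b N s a i w then 1 else 0::real)) \<le> real N powr b"
    proof (cases "real (card (nball w N a s)) \<le> real N powr b")
      case True
      have "(\<Sum>i<N. (if B1 b N s a i w then 1 else 0::real)) = real (card ({..<N} \<inter> {i. B1 b N s a i w}))"
        by (simp add: sum.If_cases)
      also have "{..<N} \<inter> {i. B1 b N s a i w} = nball w N a s"
        using True unfolding B1_def nball_def by auto
      finally show ?thesis using True by simp
    next
      case False
      then have "(\<Sum>i<N. (if B1 b N s a i w then 1 else 0::real)) = 0"
        unfolding B1_def by simp
      then show ?thesis by simp
    qed
  qed simp
  also have "\<dots> = real N powr b"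
    by (simp add: sum_distrib_right[symmetric] sum_pmf_eq_1[OF fin])
  finally show ?thesis .
qed



lemma msub: "measure_pmf.prob M (A \<union> B) \<le> measure_pmf.prob M A + measure_pmf.prob M B"
  using measure_subadditive[where A=A and B=B and M="measure_pmf M"]
  by (simp add: measure_pmf.emeasure_finite)

definition Good :: "(real \<Rightarrow> real) \<Rightarrow> (nat \<Rightarrow> nat \<Rightarrow> real) \<Rightarrow> real \<Rightarrow> nat \<Rightarrow> real \<Rightarrow> bool" where
  "Good h lam \<xi> N eps = (\<forall>i j. i < N \<longrightarrow> j < N \<longrightarrow> i \<noteq> j \<longrightarrow> lam N i \<le> real N powr \<xi> \<longrightarrow> lam N j \<le> real N powr \<xi> \<longrightarrow>
      measure_pmf.prob (pp h lam N (min i j, max i j)) {y. snd (snd y)} \<le> eps \<and>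
      measure_pmf.prob (pp h lam N (min i j, max i j)) {y. \<not> fst y} \<ge> 1/2)"

lemma per_a:
  assumes N: "0 < N" and G: "Good h lam \<xi> N eps" and eps: "0 \<le> eps"
  shows "measure_pmf.prob (edge_pmf h lam N) {w. Badp lam \<xi> N t w a \<and> real (card (nball w N a (t-1))) \<le> real N powr b}
     \<le> eps * 4 * real N * real N powr b"
proof -
  let ?Q = "edge_pmf h lam N"
  let ?L = "{(i,j). i < N \<and> j < N \<and> i \<noteq> j \<and> lam N i \<le> real N powr \<xi> \<and> lam N j \<le> real N powr \<xi>}"
  let ?A = "\<lambda>(i,j). {w. Kc w i j \<and> B1 b N (t-1) a i w}"
  let ?P = "\<lambda>i. measure_pmf.prob ?Q {w. B1 b N (t-1) a i w}"
  have finL: "finite ?L" by (rule finite_subset[of _ "{..<N} \<times> {..<N}"]) auto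
  have "{w. Badp lam \<xi> N t w a \<and> real (card (nball w N a (t-1))) \<le> real N powr b} \<subseteq> (\<Union>z\<in>?L. ?A z)"
  proof
    fix w assume "w \<in> {w. Badp lam \<xi> N t w a \<and> real (card (nball w N a (t-1))) \<le> real N powr b}"
    then obtain i j where ij: "i < N" "j < N" "i \<noteq> j" "Kc w i j" "lam N i \<le> real N powr \<xi>"
      "lam N j \<le> real N powr \<xi>" "gdist (edgesG w) a i \<le> enat (t - 1)"
      and sm: "real (card (nball w N a (t-1))) \<le> real N powr b"
      unfolding Badp_def by blast
    have "B1 b N (t-1) a i w" unfolding B1_def nball_def using ij sm by (simp add: nball_def)
    then show "w \<in> (\<Union>z\<in>?L. ?A z)" using ij by (intro UN_I[of "(i,j)"]) auto
  qed
  then have "measure_pmf.prob ?Q {w. Badp lam \<xi> N t w a \<and> real (card (nball w N a (t-1))) \<le> real N powr b}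
      \<le> measure_pmf.prob ?Q (\<Union>z\<in>?L. ?A z)"
    by (intro measure_pmf.finite_measure_mono) auto
  also have "\<dots> \<le> (\<Sum>z\<in>?L. measure_pmf.prob ?Q (?A z))"
    by (rule measure_subadditive_finite[OF finL]) (auto simp: measure_pmf.emeasure_finite)
  also have "\<dots> \<le> (\<Sum>z\<in>?L. eps * 2 * (?P (fst z) + ?P (snd z)))"
  proof (rule sum_mono)
    fix z assume z: "z \<in> ?L"
    obtain i j where zij: "z = (i,j)" by (cases z)
    have ij: "i < N" "j < N" "i \<noteq> j" "lam N i \<le> real N powr \<xi>" "lam N j \<le> real N powr \<xi>" using z zij by auto
    have "measure_pmf.prob ?Q {w. Kc w i j \<and> B1 b N (t-1) a i w} \<le> eps * 2 * (?P i + ?P j)"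
      by (rule core3[OF ij(1-3) refl]) (use G ij in \<open>auto simp: Good_def\<close>)
    then show "measure_pmf.prob ?Q (?A z) \<le> eps * 2 * (?P (fst z) + ?P (snd z))" using zij by simp
  qed
  also have "\<dots> \<le> (\<Sum>z\<in>{..<N} \<times> {..<N}. eps * 2 * (?P (fst z) + ?P (snd z)))"
    by (rule sum_mono2) (auto intro!: mult_nonneg_nonneg add_nonneg_nonneg eps)
  also have "\<dots> = (\<Sum>i<N. \<Sum>j<N. eps * 2 * (?P i + ?P j))"
    unfolding sum.cartesian_product by (simp add: case_prod_beta)
  also have "\<dots> = eps * 2 * (\<Sum>i<N. \<Sum>j<N. (?P i + ?P j))"
    by (simp add: sum_distrib_left)
  also have "(\<Sum>i<N. \<Sum>j<N. (?P i + ?P j)) = 2 * real N * (\<Sum>i<N. ?P i)"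
    by (simp add: sum.distrib sum_distrib_left[symmetric] sum.swap[of "\<lambda>i j. ?P j"] algebra_simps)
  also have "eps * 2 * (2 * real N * (\<Sum>i<N. ?P i)) \<le> eps * 2 * (2 * real N * real N powr b)"
    using sum_B1[OF N, of h lam b "t-1" a] eps by (intro mult_left_mono) auto
  finally show ?thesis by (simp add: algebra_simps)
qed

lemma unif_bound:
  assumes N: "0 < (N::nat)" and b: "\<And>a. a < N \<Longrightarrow> measure_pmf.prob Q {w. (a,w) \<in> T} \<le> M"
    and finQ: "finite (set_pmf Q)"
  shows "measure_pmf.prob (pair_pmf (pmf_of_set {..<N}) Q) T \<le> M"
proof -
  have ne: "{..<N} \<noteq> {}" using N by auto
  have sp: "set_pmf (pmf_of_set {..<N}) = {..<N}" using set_pmf_of_set[OF ne] by simp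
  have fin: "finite (set_pmf (pmf_of_set {..<N}))" using sp by simp
  have "measure_pmf.prob (pair_pmf (pmf_of_set {..<N}) Q) T
     = (\<Sum>a\<in>{..<N}. pmf (pmf_of_set {..<N}) a * measure_pmf.prob Q {w. (a,w) \<in> T})"
    using measure_pair_finite[OF fin finQ] sp by simp
  also have "\<dots> \<le> (\<Sum>a\<in>{..<N}. pmf (pmf_of_set {..<N}) a * M)"
    by (intro sum_mono mult_left_mono b) auto
  also have "\<dots> = M" using sum_pmf_eq_1[of "{..<N}" "pmf_of_set {..<N}"] sp N
    by (simp add: sum_distrib_right[symmetric])
  finally show ?thesis .
qed



lemma ball_part:
  assumes N: "2 \<le> N" and G: "Good h lam \<xi> N eps" and eps: "0 \<le> eps"
  shows "measure_pmf.prob (pair_pmf (pmf_of_set {..<N}) (edge_pmf h lam N)) {(a,w). Badp lam \<xi> N t w a}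
     \<le> prob_ball_gt h lam N (t-1) b + eps * 4 * real N * real N powr b"
proof -
  let ?M = "pair_pmf (pmf_of_set {..<N}) (edge_pmf h lam N)"
  have "{(a,w). Badp lam \<xi> N t w a} \<subseteq>
     {(a,w). real (card {j. j < N \<and> gdist (edgesG w) a j \<le> enat (t-1)}) > real N powr b}
     \<union> {(a,w). Badp lam \<xi> N t w a \<and> real (card (nball w N a (t-1))) \<le> real N powr b}"
    unfolding nball_def by auto
  then have "measure_pmf.prob ?M {(a,w). Badp lam \<xi> N t w a} \<le> measure_pmf.prob ?M
     ({(a,w). real (card {j. j < N \<and> gdist (edgesG w) a j \<le> enat (t-1)}) > real N powr b}
     \<union> {(a,w). Badp lam \<xi> N t w a \<and> real (card (nball w N a (t-1))) \<le> real N powr b})"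
    by (intro measure_pmf.finite_measure_mono) auto
  also have "\<dots> \<le> prob_ball_gt h lam N (t-1) b
      + measure_pmf.prob ?M {(a,w). Badp lam \<xi> N t w a \<and> real (card (nball w N a (t-1))) \<le> real N powr b}"
    unfolding prob_ball_gt_def by (rule msub)
  also have "measure_pmf.prob ?M {(a,w). Badp lam \<xi> N t w a \<and> real (card (nball w N a (t-1))) \<le> real N powr b}
      \<le> eps * 4 * real N * real N powr b"
    by (rule unif_bound) (use N per_a[OF _ G eps] finite_edge_support in auto)
  finally show ?thesis by simp
qed

lemma main_N:
  assumes pos: "\<forall>i<N. 0 < lam N i" and hr: "\<forall>x\<ge>0. 0 \<le> h x \<and> h x \<le> 1"
    and N: "2 \<le> N" and G: "Good h lam \<xi> N eps" and eps: "0 \<le> eps" and t: "1 \<le> t"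
  shows "prob_H_neq h lam N \<le> prob_notA h lam \<xi> N + prob_H_gt h lam N (2*t)
      + 2 * prob_ball_gt h lam N (t-1) b + 2 * (eps * 4 * real N * real N powr b)"
proof -
  let ?Q = "edge_pmf h lam N"
  let ?PP = "pair_pmf (node_pair_pmf N) ?Q"
  let ?S = "{((a1,a2),\<omega>). gdist (edgesG \<omega>) a1 a2 \<noteq> gdist (edgesG' \<omega>) a1 a2}"
  let ?S1 = "UNIV \<times> (- eventA lam \<xi> N)"
  let ?S2 = "{((a1,a2),\<omega>). gdist (edgesG \<omega>) a1 a2 > enat (2*t)}"
  let ?S3 = "{((a1,a2),w). Badp lam \<xi> N t w a1}"
  let ?S4 = "{((a1,a2),w). Badp lam \<xi> N t w a2}"
  let ?pairs = "{(a1,a2). a1 < N \<and> a2 < (N::nat) \<and> a1 \<noteq> a2}"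
  have finpairs: "finite ?pairs" by (rule finite_subset[of _ "{..<N} \<times> {..<N}"]) auto
  have "(0,1) \<in> ?pairs" using N by auto
  then have nepairs: "?pairs \<noteq> {}" by blast
  have finN: "finite (set_pmf (node_pair_pmf N))"
    unfolding node_pair_pmf_def using set_pmf_of_set[OF nepairs finpairs] finpairs by simp
  have "prob_H_neq h lam N = measure_pmf.prob ?PP (?S \<inter> set_pmf ?PP)"
    unfolding prob_H_neq_def by (rule measure_Int_set_pmf[symmetric])
  also have "\<dots> \<le> measure_pmf.prob ?PP (((?S1 \<union> ?S2) \<union> ?S3) \<union> ?S4)"
  proof (rule measure_pmf.finite_measure_mono)
    show "?S \<inter> set_pmf ?PP \<subseteq> ((?S1 \<union> ?S2) \<union> ?S3) \<union> ?S4"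
    proof
      fix z assume z: "z \<in> ?S \<inter> set_pmf ?PP"
      obtain a1 a2 w where zz: "z = ((a1,a2),w)" by (metis prod.collapse)
      have w: "w \<in> set_pmf ?Q" and ne: "gdist (edgesG w) a1 a2 \<noteq> gdist (edgesG' w) a1 a2"
        using z zz by auto
      show "z \<in> ((?S1 \<union> ?S2) \<union> ?S3) \<union> ?S4"
      proof (cases "w \<in> eventA lam \<xi> N \<and> gdist (edgesG w) a1 a2 \<le> enat (2*t)")
        case True
        from bad_cover[OF pos hr w _ t _ ne] True
        have "Badp lam \<xi> N t w a1 \<or> Badp lam \<xi> N t w a2" by blast
        then show ?thesis using zz by auto
      next
        case False
        then show ?thesis using zz by (auto simp: not_le)
      qed
    qed
  qed simp
  also have "\<dots> \<le> measure_pmf.prob ?PP ?S1 + measure_pmf.prob ?PP ?S2 + measure_pmf.prob ?PP ?S3 + measure_pmf.prob ?PP ?S4"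
    using msub[of ?PP "(?S1 \<union> ?S2) \<union> ?S3" ?S4] msub[of ?PP "?S1 \<union> ?S2" ?S3] msub[of ?PP ?S1 ?S2] by linarith
  also have "measure_pmf.prob ?PP ?S1 = prob_notA h lam \<xi> N"
    unfolding prob_notA_def using pair_prod_measure[OF finN finite_edge_support, where X=UNIV and Y="- eventA lam \<xi> N"]
    by simp
  also have "measure_pmf.prob ?PP ?S2 = prob_H_gt h lam N (2*t)"
    unfolding prob_H_gt_def ..
  also have "measure_pmf.prob ?PP ?S3 \<le> prob_ball_gt h lam N (t-1) b + eps * 4 * real N * real N powr b"
    using pair_marg1[OF N, of ?Q "\<lambda>a w. Badp lam \<xi> N t w a"] ball_part[OF N G eps, of t b] by simp
  also have "measure_pmf.prob ?PP ?S4 \<le> prob_ball_gt h lam N (t-1) b + eps * 4 * real N * real N powr b"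
    using pair_marg2[OF N, of ?Q "\<lambda>a w. Badp lam \<xi> N t w a"] ball_part[OF N G eps, of t b] by simp
  finally show ?thesis by simp
qed



lemma exp_neg_upper:
  assumes "0 \<le> (w::real)"
  shows "exp (- w) \<le> 1 - w + w^2/2"
proof -
  have e: "1 + w + w^2/2 \<le> exp w" using exp_lower_Taylor_quadratic[OF assms] .
  have pos: "0 < 1 + w + w^2/2" using assms by (simp add: add_pos_nonneg)
  have "exp (- w) = 1 / exp w" by (simp add: exp_minus field_simps)
  also have "\<dots> \<le> 1 / (1 + w + w^2/2)" using e pos by (intro divide_left_mono) auto
  also have "\<dots> \<le> 1 - w + w^2/2"
  proof -
    have "(1 - w + w^2/2) * (1 + w + w^2/2) = 1 + w^4/4" by (simp add: algebra_simps power2_eq_square power4_eq_xxxx)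
    then have "1 \<le> (1 - w + w^2/2) * (1 + w + w^2/2)" by simp
    then show ?thesis using pos by (simp add: divide_le_eq)
  qed
  finally show ?thesis .
qed

lemma exp_bounds:
  assumes "0 \<le> (w::real)"
  shows "\<bar>1 - exp (- w) - w\<bar> \<le> w^2" and "1 - w \<le> exp (- w)"
proof -
  have l: "1 - w \<le> exp (- w)" using exp_ge_add_one_self[of "-w"] by simp
  have u: "exp (- w) \<le> 1 - w + w^2/2" by (rule exp_neg_upper[OF assms])
  have "0 \<le> w^2" by simp
  then show "\<bar>1 - exp (- w) - w\<bar> \<le> w^2" using l u by (simp add: abs_le_iff)
  show "1 - w \<le> exp (- w)" by (rule l)
qed

lemma t0_case:
  assumes N: "2 \<le> N"
  shows "prob_H_neq h lam N \<le> prob_H_gt h lam N 0"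
proof -
  let ?PP = "pair_pmf (node_pair_pmf N) (edge_pmf h lam N)"
  let ?pairs = "{(a1,a2). a1 < N \<and> a2 < (N::nat) \<and> a1 \<noteq> a2}"
  have finpairs: "finite ?pairs" by (rule finite_subset[of _ "{..<N} \<times> {..<N}"]) auto
  have "(0,1) \<in> ?pairs" using N by auto
  then have nepairs: "?pairs \<noteq> {}" by blast
  have sp: "set_pmf (node_pair_pmf N) = ?pairs"
    unfolding node_pair_pmf_def using set_pmf_of_set[OF nepairs finpairs] by simp
  have "prob_H_neq h lam N = measure_pmf.prob ?PP ({((a1,a2),\<omega>). gdist (edgesG \<omega>) a1 a2 \<noteq> gdist (edgesG' \<omega>) a1 a2} \<inter> set_pmf ?PP)"
    unfolding prob_H_neq_def by (rule measure_Int_set_pmf[symmetric])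
  also have "\<dots> \<le> prob_H_gt h lam N 0"
    unfolding prob_H_gt_def
  proof (rule measure_pmf.finite_measure_mono)
    show "{((a1,a2),\<omega>). gdist (edgesG \<omega>) a1 a2 \<noteq> gdist (edgesG' \<omega>) a1 a2} \<inter> set_pmf ?PP
      \<subseteq> {((a1,a2),\<omega>). gdist (edgesG \<omega>) a1 a2 > enat 0}"
    proof
      fix z assume z: "z \<in> {((a1,a2),\<omega>). gdist (edgesG \<omega>) a1 a2 \<noteq> gdist (edgesG' \<omega>) a1 a2} \<inter> set_pmf ?PP"
      obtain a1 a2 w where zz: "z = ((a1,a2),w)" by (metis prod.collapse)
      have ne: "a1 \<noteq> a2" using z zz sp by auto
      have "gdist (edgesG w) a1 a2 \<noteq> enat 0"
      proof
        assume "gdist (edgesG w) a1 a2 = enat 0"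
        from gdist_enat(1)[OF this] ne show False by simp
      qed
      then have "gdist (edgesG w) a1 a2 > enat 0" by (simp add: zero_enat_def[symmetric] not_gr_zero)
      then show "z \<in> {((a1,a2),\<omega>). gdist (edgesG \<omega>) a1 a2 > enat 0}" using zz by simp
    qed
  qed simp
  finally show ?thesis .
qed



lemma good_asymp:
  assumes pos: "\<And>N i. i < N \<Longrightarrow> lam N i > 0"
    and mu: "0 < \<mu>" "(\<lambda>N. muN lam N - \<mu>) \<in> O(\<lambda>N. real N powr (- \<alpha>1))" "0 < \<alpha>1"
    and hr: "\<And>x. 0 \<le> x \<Longrightarrow> 0 \<le> h x \<and> h x \<le> 1"
    and hs: "(\<lambda>x. h x - x) \<in> O[at_right 0](\<lambda>x. x ^ 2)"
    and xi: "0 < \<xi>" "\<xi> < 1/2"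
  shows "\<exists>D N0. 0 \<le> D \<and> 2 \<le> N0 \<and> (\<forall>N\<ge>N0. Good h lam \<xi> N (D * (real N powr \<xi>)^4 / (real N)^2))"
proof -
  obtain c where c: "c > 0" and ev1: "eventually (\<lambda>N. norm (muN lam N - \<mu>) \<le> c * norm (real N powr (- \<alpha>1))) at_top"
    using landau_o.bigE[OF mu(2)] by blast
  obtain K where K: "K > 0" and ev2: "eventually (\<lambda>x. norm (h x - x) \<le> K * norm (x^2)) (at_right (0::real))"
    using landau_o.bigE[OF hs] by blast
  obtain \<delta> where \<delta>: "\<delta> > 0" and hK: "\<And>y. 0 < y \<Longrightarrow> y < \<delta> \<Longrightarrow> norm (h y - y) \<le> K * norm (y^2)"
    using ev2 unfolding eventually_at_right_field by blast
  have lim1: "((\<lambda>N. real N powr (- \<alpha>1)) \<longlongrightarrow> 0) sequentially"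
    by (rule tendsto_neg_powr) (use mu(3) filterlim_real_sequentially in auto)
  have ev3: "eventually (\<lambda>N. real N powr (- \<alpha>1) < \<mu> / (2*c)) sequentially"
    using order_tendstoD(2)[OF lim1] mu(1) c by simp
  have lim2: "((\<lambda>N. real N powr (2*\<xi> - 1)) \<longlongrightarrow> 0) sequentially"
    by (rule tendsto_neg_powr) (use xi filterlim_real_sequentially in auto)
  define r where "r = \<mu> * min \<delta> (1/2) / 2"
  have r: "r > 0" unfolding r_def using mu(1) \<delta> by simp
  have ev4: "eventually (\<lambda>N. real N powr (2*\<xi> - 1) < r) sequentially"
    using order_tendstoD(2)[OF lim2 r] .
  have ev5: "eventually (\<lambda>N::nat. 2 \<le> N) sequentially" by (rule eventually_ge_at_top)
  have "eventually (\<lambda>N. norm (muN lam N - \<mu>) \<le> c * norm (real N powr (- \<alpha>1)) \<and>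
     real N powr (- \<alpha>1) < \<mu> / (2*c) \<and> real N powr (2*\<xi> - 1) < r \<and> 2 \<le> N) sequentially"
    using ev1 ev3 ev4 ev5 by eventually_elim auto
  then obtain N0 where N0: "\<And>N. N \<ge> N0 \<Longrightarrow> norm (muN lam N - \<mu>) \<le> c * norm (real N powr (- \<alpha>1)) \<and>
     real N powr (- \<alpha>1) < \<mu> / (2*c) \<and> real N powr (2*\<xi> - 1) < r \<and> 2 \<le> N"
    unfolding eventually_sequentially by blast
  define D where "D = 4 * (1 + K) / \<mu>^2"
  have D: "0 \<le> D" unfolding D_def using K by simp
  have good: "Good h lam \<xi> N (D * (real N powr \<xi>)^4 / (real N)^2)" if N: "N \<ge> N0" for N
  proof -
    from N0[OF N] have A: "norm (muN lam N - \<mu>) \<le> c * norm (real N powr (- \<alpha>1))"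
      and B: "real N powr (- \<alpha>1) < \<mu> / (2*c)" and C: "real N powr (2*\<xi> - 1) < r" and N2: "2 \<le> N"
      by auto
    have Npos: "0 < real N" using N2 by simp
    have "c * norm (real N powr (- \<alpha>1)) = c * real N powr (- \<alpha>1)" by simp
    also have "\<dots> < c * (\<mu> / (2*c))" using mult_strict_left_mono[OF B c] .
    also have "\<dots> = \<mu> / 2" using c by simp
    finally have "\<bar>muN lam N - \<mu>\<bar> < \<mu>/2" using A by simp
    then have muN: "muN lam N \<ge> \<mu>/2" by linarith
    have lN: "lN lam N = real N * muN lam N" unfolding lN_def muN_def using Npos by simp
    have lNge: "lN lam N \<ge> real N * \<mu> / 2" unfolding lN using muN Npos
      by (metis mult_left_mono less_imp_le times_divide_eq_right)
    have lNpos: "lN lam N > 0" using lNge Npos mu(1) by (smt (verit) mult_pos_pos half_gt_zero)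
    define cN where "cN = real N powr \<xi>"
    have cN0: "0 \<le> cN" unfolding cN_def by simp
    have cN2: "cN^2 = real N powr (2*\<xi>)" unfolding cN_def using Npos
      by (simp add: powr_power)
    have pw: "real N powr (2*\<xi> - 1) = cN^2 / real N" unfolding cN2 using Npos
      by (simp add: powr_diff)
    show ?thesis unfolding Good_def
    proof (intro allI impI)
      fix i j assume ij: "i < N" "j < N" "i \<noteq> j" "lam N i \<le> real N powr \<xi>" "lam N j \<le> real N powr \<xi>"
      define u where "u = min i j"
      define v where "v = max i j"
      have uv: "u < N" "v < N" "lam N u \<le> cN" "lam N v \<le> cN"
        using ij unfolding u_def v_def cN_def by (auto simp: min_def max_def)
      have upos: "0 < lam N u" "0 < lam N v" using pos uv(1,2) by auto
      define w where "w = wN lam N u v"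
      have w_eq: "w = lam N u * lam N v / lN lam N" unfolding w_def wN_def ..
      have wpos: "0 < w" unfolding w_eq using upos lNpos by simp
      have prod_le: "lam N u * lam N v \<le> cN^2" unfolding power2_eq_square
        using uv upos by (intro mult_mono) auto
      have "w \<le> cN^2 / (real N * \<mu> / 2)" unfolding w_eq
        using prod_le lNge upos Npos mu(1)
        by (intro frac_le) (auto intro: mult_pos_pos)
      also have "\<dots> = (2/\<mu>) * (cN^2 / real N)" using mu(1) Npos by (simp add: field_simps)
      finally have wle: "w \<le> (2/\<mu>) * (cN^2 / real N)" .
      have "(2/\<mu>) * (cN^2 / real N) < (2/\<mu>) * r" using C pw mu(1) by (intro mult_strict_left_mono) auto
      also have "\<dots> = min \<delta> (1/2)" unfolding r_def using mu(1) by simp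
      finally have wsmall: "w < \<delta>" "w < 1/2" using wle by auto
      have p_eq: "pN lam N u v = 1 - exp (- w)" unfolding pN_def w_def ..
      have p'_eq: "pN' h lam N u v = h w" unfolding pN'_def w_def ..
      have pr: "0 \<le> pN lam N u v \<and> pN lam N u v \<le> 1" by (rule pN_range) (use pos uv in auto)
      have pr': "0 \<le> pN' h lam N u v \<and> pN' h lam N u v \<le> 1" by (rule pN'_range) (use pos hr uv in auto)
      have ppuv: "pp h lam N (u, v) = coup (pN lam N u v) (pN' h lam N u v)" unfolding pp_def by simp
      have K1: "measure_pmf.prob (pp h lam N (u, v)) {y. snd (snd y)} = \<bar>pN lam N u v - pN' h lam N u v\<bar>"
        unfolding ppuv using pr pr' by (intro coup_K) auto
      have K2: "measure_pmf.prob (pp h lam N (u, v)) {y. \<not> fst y} = 1 - pN lam N u v"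
        unfolding ppuv using pr pr' by (intro coup_notX) auto
      have "\<bar>pN lam N u v - pN' h lam N u v\<bar> = \<bar>(1 - exp (- w) - w) - (h w - w)\<bar>" unfolding p_eq p'_eq by simp
      also have "\<dots> \<le> \<bar>1 - exp (- w) - w\<bar> + \<bar>h w - w\<bar>" by (rule abs_triangle_ineq4)
      also have "\<dots> \<le> w^2 + K * w^2"
        using exp_bounds(1)[of w] wpos hK[OF wpos wsmall(1)] by simp
      also have "\<dots> = (1 + K) * w^2" by (simp add: algebra_simps)
      also have "\<dots> \<le> (1 + K) * ((2/\<mu>) * (cN^2 / real N))^2"
        using wle wpos K by (intro mult_left_mono power_mono) auto
      also have "\<dots> = D * cN^4 / (real N)^2" unfolding D_def
        by (simp add: power_mult_distrib power_divide field_simps flip: power_mult)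
      finally have Kb: "\<bar>pN lam N u v - pN' h lam N u v\<bar> \<le> D * cN^4 / (real N)^2" .
      have "1 - pN lam N u v = exp (- w)" unfolding p_eq by simp
      also have "\<dots> \<ge> 1 - w" using exp_bounds(2)[of w] wpos by simp
      finally have "1 - pN lam N u v \<ge> 1/2" using wsmall(2) by simp
      then show "measure_pmf.prob (pp h lam N (min i j, max i j)) {y. snd (snd y)} \<le> D * (real N powr \<xi>)^4 / (real N)^2 \<and>
          measure_pmf.prob (pp h lam N (min i j, max i j)) {y. \<not> fst y} \<ge> 1/2"
        using K1 K2 Kb unfolding u_def[symmetric] v_def[symmetric] cN_def by simp
    qed
  qed
  show ?thesis using D good by (intro exI[of _ D] exI[of _ "max N0 2"]) auto
qed



theorem proposition2p3:
  fixes lam :: "nat \<Rightarrow> nat \<Rightarrow> real" and h :: "real \<Rightarrow> real" and \<xi> :: real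
  assumes pos: "\<And>N i. i < N \<Longrightarrow> lam N i > 0"
    and C1: "\<exists>\<mu> \<nu> \<alpha>1. 0 < \<mu> \<and> 1 < \<nu> \<and> 0 < \<alpha>1 \<and>
              (\<lambda>N. muN lam N - \<mu>) \<in> O(\<lambda>N. real N powr (- \<alpha>1)) \<and>
              (\<lambda>N. nuN lam N - \<nu>) \<in> O(\<lambda>N. real N powr (- \<alpha>1))"
    and C2: "\<exists>f g :: nat \<Rightarrow> real. \<exists>\<alpha>2 > 0.
              (\<forall>\<^sub>F N in sequentially. summable (\<lambda>j. \<bar>fN lam N j - f j\<bar>)
                                       \<and> summable (\<lambda>j. \<bar>gN lam N j - g j\<bar>)) \<and>
              (\<lambda>N. dTV (fN lam N) f) \<in> O(\<lambda>N. real N powr (- \<alpha>2)) \<and>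
              (\<lambda>N. dTV (gN lam N) g) \<in> O(\<lambda>N. real N powr (- \<alpha>2))"
    and C3: "\<exists>\<tau> > 3. \<forall>\<epsilon> > 0. 1 / (\<tau> - 1) + \<epsilon> < 1/2 \<longrightarrow>
              limsup (\<lambda>N. ereal ((1 / real N) * (\<Sum>i<N. lam N i powr (\<tau> - 1 - \<epsilon>)))) < \<infinity> \<and>
              (\<forall>N \<ge> 1. \<forall>i < N. lam N i \<le> real N powr (1 / (\<tau> - 1) + \<epsilon>))"
    and h_range: "\<And>x. 0 \<le> x \<Longrightarrow> 0 \<le> h x \<and> h x \<le> 1"
    and h_small: "(\<lambda>x. h x - x) \<in> O[at_right 0](\<lambda>x. x ^ 2)"
    and xi_pos: "\<xi> > 0"
  shows "\<exists>C. \<exists>N0. \<forall>N \<ge> N0. \<forall>(t::nat) (b::real). 0 < b \<and> b < 1 \<longrightarrow>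
           prob_H_neq h lam N
             \<le> prob_notA h lam \<xi> N + prob_H_gt h lam N (2 * t)
                + 2 * real t * prob_ball_gt h lam N (t - 1) b
                + C * real t * real N powr (-1 + b) * (real N powr \<xi>) ^ 4"
proof -
  have pos': "\<forall>i<N. 0 < lam N i" for N using pos by blast
  have hr': "\<forall>x\<ge>0. 0 \<le> h x \<and> h x \<le> 1" using h_range by blast
  obtain \<mu> \<nu> \<alpha>1 where mu: "0 < \<mu>" "0 < \<alpha>1" "(\<lambda>N. muN lam N - \<mu>) \<in> O(\<lambda>N. real N powr (- \<alpha>1))"
    using C1 by blast
  have t0: "prob_H_neq h lam N
             \<le> prob_notA h lam \<xi> N + prob_H_gt h lam N (2 * t)
                + 2 * real t * prob_ball_gt h lam N (t - 1) b
                + C * real t * real N powr (-1 + b) * (real N powr \<xi>) ^ 4"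
    if "t = 0" "2 \<le> N" for C N t b
  proof -
    have "prob_H_neq h lam N \<le> prob_H_gt h lam N 0" by (rule t0_case[OF that(2)])
    moreover have "0 \<le> prob_notA h lam \<xi> N" unfolding prob_notA_def by simp
    ultimately show ?thesis using that(1) by simp
  qed
  show ?thesis
  proof (cases "\<xi> < 1/2")
    case True
    obtain D N0 where D: "0 \<le> D" "2 \<le> N0" and G: "\<And>N. N \<ge> N0 \<Longrightarrow> Good h lam \<xi> N (D * (real N powr \<xi>)^4 / (real N)^2)"
      using good_asymp[OF _ mu(1) mu(3) mu(2) _ h_small xi_pos True] pos h_range by metis
    show ?thesis
    proof (intro exI[of _ "8 * D"] exI[of _ N0] allI impI, elim conjE)
      fix N t and b :: real assume N: "N0 \<le> N" and b: "0 < b" "b < 1"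
      have N2: "2 \<le> N" using N D(2) by simp
      show "prob_H_neq h lam N
             \<le> prob_notA h lam \<xi> N + prob_H_gt h lam N (2 * t)
                + 2 * real t * prob_ball_gt h lam N (t - 1) b
                + 8 * D * real t * real N powr (-1 + b) * (real N powr \<xi>) ^ 4"
      proof (cases "t = 0")
        case True then show ?thesis using t0 N2 by blast
      next
        case False
        then have t: "1 \<le> t" by simp
        let ?eps = "D * (real N powr \<xi>)^4 / (real N)^2"
        have eps: "0 \<le> ?eps" using D by simp
        have main: "prob_H_neq h lam N \<le> prob_notA h lam \<xi> N + prob_H_gt h lam N (2*t)
            + 2 * prob_ball_gt h lam N (t-1) b + 2 * (?eps * 4 * real N * real N powr b)"
          by (rule main_N[OF pos' hr' N2 G[OF N] eps t])
        have Npos: "0 < real N" using N2 by simp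
        have pb0: "0 \<le> prob_ball_gt h lam N (t-1) b" unfolding prob_ball_gt_def by simp
        have "2 * prob_ball_gt h lam N (t-1) b \<le> 2 * real t * prob_ball_gt h lam N (t-1) b"
          using t pb0 by (simp add: mult_right_mono)
        moreover have "2 * (?eps * 4 * real N * real N powr b) = 8 * D * real N powr (-1 + b) * (real N powr \<xi>) ^ 4"
        proof -
          have "real N powr (-1 + b) = real N powr (b - 1)" by simp
          also have "\<dots> = real N powr b / real N powr 1" by (rule powr_diff)
          also have "\<dots> = real N powr b / real N" using Npos by simp
          finally have pw: "real N powr (-1 + b) = real N powr b / real N" .
          show ?thesis unfolding pw using Npos by (simp add: field_simps power2_eq_square)
        qed
        moreover have "8 * D * real N powr (-1 + b) * (real N powr \<xi>) ^ 4 \<le> 8 * D * real t * real N powr (-1 + b) * (real N powr \<xi>) ^ 4"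
        proof -
          have "0 \<le> 8 * D * real N powr (-1 + b) * (real N powr \<xi>) ^ 4" using D by simp
          then have "8 * D * real N powr (-1 + b) * (real N powr \<xi>) ^ 4 * 1 \<le> 8 * D * real N powr (-1 + b) * (real N powr \<xi>) ^ 4 * real t"
            using t by (intro mult_left_mono) auto
          then show ?thesis by (simp add: algebra_simps)
        qed
        ultimately show ?thesis using main by linarith
      qed
    qed
  next
    case False
    show ?thesis
    proof (intro exI[of _ "1::real"] exI[of _ "2::nat"] allI impI, elim conjE)
      fix N t :: nat and b :: real assume N2: "2 \<le> N" and b: "0 < b" "b < 1"
      show "prob_H_neq h lam N
             \<le> prob_notA h lam \<xi> N + prob_H_gt h lam N (2 * t)
                + 2 * real t * prob_ball_gt h lam N (t - 1) b
                + 1 * real t * real N powr (-1 + b) * (real N powr \<xi>) ^ 4"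
      proof (cases "t = 0")
        case True then show ?thesis using t0 N2 by blast
      next
        case t0': False
        then have t: "1 \<le> real t" by simp
        have Npos: "0 < real N" using N2 by simp
        have "real N powr (-1 + b) * (real N powr \<xi>) ^ 4 = real N powr (-1 + b + 4 * \<xi>)"
          using Npos by (simp add: powr_power powr_add)
        also have "\<dots> \<ge> 1" using False b N2 by (intro ge_one_powr_ge_zero) auto
        finally have e1: "1 \<le> real N powr (-1 + b) * (real N powr \<xi>) ^ 4" .
        have "1 \<le> real t * (real N powr (-1 + b) * (real N powr \<xi>) ^ 4)"
          using t e1 by (metis mult_mono' mult_1 zero_le_one)
        moreover have "prob_H_neq h lam N \<le> 1" unfolding prob_H_neq_def by simp
        moreover have "0 \<le> prob_notA h lam \<xi> N" unfolding prob_notA_def by simp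
        moreover have "0 \<le> prob_H_gt h lam N (2 * t)" unfolding prob_H_gt_def by simp
        moreover have "0 \<le> prob_ball_gt h lam N (t - 1) b" unfolding prob_ball_gt_def by simp
        ultimately show ?thesis by (simp add: mult.assoc) (smt (verit) mult_nonneg_nonneg of_nat_0_le_iff)
      qed
    qed
  qed
qed


end
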